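(* Let $n,a,t,k\in\mathbb N$ satisfy $t<a<n$. Assume $\mathcal F_1,\dots,\mathcal F_k\subseteq\binom{[n]}{a}$ satisfy $$|\mathcal F_i|\ge 2^{k-2}\cdot\sqrt{32a(n-a)}\cdot\exp\left(-\frac{(a-t-1)^2}{40a}\right)\cdot\binom{n}{a}+2^{k-2}$$ for all $i\in\{1,\dots,k\}$. Then there are $F_1\in\mathcal F_1,\dots,F_k\in\mathcal F_k$ such that $|F_1\cap F_i|\ge t+1$ for all $i\in\{2,\dots,k\}$.
   Context: $[n]=\{1,\dots,n\}$ and $\binom{[n]}{a}$ denotes the family of all $a$-element subsets of $[n]$. *)

theory Defs
  imports "HOL-Analysis.Analysis"
begin

definition ksubsets :: "nat \<Rightarrow> nat \<Rightarrow> nat set set" where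
  "ksubsets n a = {S. S \<subseteq> {1..n} \<and> card S = a}"

end

theory Submission
  imports Defs
begin

definition sh :: "nat \<Rightarrow> nat \<Rightarrow> nat set \<Rightarrow> nat set" where
  "sh i j X = insert i (X - {j})"

definition shf :: "nat \<Rightarrow> nat \<Rightarrow> nat set set \<Rightarrow> nat set \<Rightarrow> nat set" where
  "shf i j F X = (if j \<in> X \<and> i \<notin> X \<and> sh i j X \<notin> F then sh i j X else X)"

definition cross :: "nat \<Rightarrow> nat set set \<Rightarrow> nat set set \<Rightarrow> bool" where
  "cross s A C = (\<forall>X\<in>A. \<forall>Y\<in>C. s \<le> card (X \<inter> Y))"

definition wt :: "nat set set \<Rightarrow> nat" where
  "wt F = (\<Sum>X\<in>F. \<Sum>X)"

lemma sh_inv: "j \<in> X \<Longrightarrow> i \<notin> X \<Longrightarrow> insert j (sh i j X - {i}) = X"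
  unfolding sh_def by auto

lemma shf_inj: "inj_on (shf i j F) F"
proof (rule inj_onI)
  fix X Y assume XF: "X \<in> F" and YF: "Y \<in> F" and e: "shf i j F X = shf i j F Y"
  show "X = Y"
  proof (cases "j \<in> X \<and> i \<notin> X \<and> sh i j X \<notin> F")
    case True
    note tx = True
    show ?thesis
    proof (cases "j \<in> Y \<and> i \<notin> Y \<and> sh i j Y \<notin> F")
      case True
      then have "sh i j X = sh i j Y" using e tx unfolding shf_def by simp
      then show ?thesis using sh_inv[of j X i] sh_inv[of j Y i] tx True by metis
    next
      case False
      then have "sh i j X = Y" using e tx False unfolding shf_def by simp
      then show ?thesis using tx YF by simp
    qed
  next
    case False
    note fx = False
    show ?thesis
    proof (cases "j \<in> Y \<and> i \<notin> Y \<and> sh i j Y \<notin> F")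
      case True
      then have "X = sh i j Y" using e fx unfolding shf_def by simp
      then show ?thesis using True XF by simp
    next
      case False
      then show ?thesis using e fx False unfolding shf_def by simp
    qed
  qed
qed

lemma card_shift: "card (shf i j F ` F) = card F"
  by (simp add: card_image shf_inj)

lemma card_sh: "finite X \<Longrightarrow> j \<in> X \<Longrightarrow> i \<notin> X \<Longrightarrow> card (sh i j X) = card X"
  unfolding sh_def by (simp add: card_insert_if) (metis card_Diff1_le card.remove finite_Diff Suc_pred card_gt_0_iff empty_iff)

lemma shift_ksub:
  assumes "F \<subseteq> ksubsets n m" "i \<in> {1..n}"
  shows "shf i j F ` F \<subseteq> ksubsets n m"
proof
  fix Z assume "Z \<in> shf i j F ` F"
  then obtain X where X: "X \<in> F" "Z = shf i j F X" by auto
  have Xk: "X \<subseteq> {1..n}" "card X = m" using X assms unfolding ksubsets_def by auto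
  have fX: "finite X" using Xk finite_subset by blast
  show "Z \<in> ksubsets n m"
  proof (cases "j \<in> X \<and> i \<notin> X \<and> sh i j X \<notin> F")
    case True
    then have "Z = sh i j X" using X unfolding shf_def by simp
    moreover have "sh i j X \<subseteq> {1..n}" using Xk assms(2) unfolding sh_def by auto
    moreover have "card (sh i j X) = m" using card_sh[OF fX] True Xk by simp
    ultimately show ?thesis unfolding ksubsets_def by simp
  next
    case False
    then show ?thesis using X assms unfolding shf_def by auto
  qed
qed

lemma sum_sh: "finite X \<Longrightarrow> j \<in> X \<Longrightarrow> i \<notin> X \<Longrightarrow> \<Sum>(sh i j X) + j = \<Sum>X + i"
  unfolding sh_def
  by (simp add: sum.insert_remove) (metis add.commute sum.remove)

lemma wt_shift_le:
  assumes fin: "finite F" "\<forall>X\<in>F. finite X" and ij: "i < j"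
  shows "wt (shf i j F ` F) \<le> wt F"
    and "(\<exists>X\<in>F. j \<in> X \<and> i \<notin> X \<and> sh i j X \<notin> F) \<Longrightarrow> wt (shf i j F ` F) < wt F"
proof -
  have eq: "wt (shf i j F ` F) = (\<Sum>X\<in>F. \<Sum>(shf i j F X))"
    unfolding wt_def by (simp add: sum.reindex shf_inj)
  have le: "\<Sum>(shf i j F X) \<le> \<Sum>X" if "X \<in> F" for X
    using sum_sh[of X j i] fin that ij unfolding shf_def by auto
  have "(\<Sum>X\<in>F. \<Sum>(shf i j F X)) \<le> wt F" unfolding wt_def by (rule sum_mono) (rule le)
  then show "wt (shf i j F ` F) \<le> wt F" using eq by simp
  assume "\<exists>X\<in>F. j \<in> X \<and> i \<notin> X \<and> sh i j X \<notin> F"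
  then obtain X where X: "X\<in>F" "j \<in> X" "i \<notin> X" "sh i j X \<notin> F" by blast
  have "\<Sum>(shf i j F X) < \<Sum>X"
    using sum_sh[of X j i] fin X ij unfolding shf_def by auto
  then have "(\<Sum>X\<in>F. \<Sum>(shf i j F X)) < wt F" unfolding wt_def
    using sum_strict_mono_ex1[OF fin(1), of "\<lambda>X. \<Sum>(shf i j F X)" "\<lambda>X. \<Sum>X"] le X(1) by blast
  then show "wt (shf i j F ` F) < wt F" using eq by simp
qed

lemma card_sh_Int:
  assumes "finite X" "j \<in> X" "i \<notin> X" "i \<noteq> j"
  shows "card (sh i j X \<inter> Y) + (if j \<in> Y then 1 else 0) = card (X \<inter> Y) + (if i \<in> Y then 1 else 0)"
proof -
  have fi: "finite (X \<inter> Y)" using assms by simp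
  have A: "sh i j X \<inter> Y = (if i \<in> Y then insert i (X \<inter> Y - {j}) else X \<inter> Y - {j})"
    unfolding sh_def using assms by auto
  have "j \<in> Y \<Longrightarrow> card (X \<inter> Y) \<ge> 1" using assms
    by (metis IntI One_nat_def card_0_eq empty_iff finite_Int less_one not_le)
  then show ?thesis using assms fi
    by (cases "i \<in> Y"; cases "j \<in> Y") (auto simp: A card_insert_if card_Diff_singleton_if)
qed

lemma card_sh_sh:
  assumes "finite X" "finite Y" "j \<in> X" "i \<notin> X" "j \<in> Y" "i \<notin> Y" "i \<noteq> j"
  shows "card (sh i j X \<inter> sh i j Y) = card (X \<inter> Y)"
proof -
  have A: "sh i j X \<inter> sh i j Y = insert i (X \<inter> Y - {j})" unfolding sh_def using assms by auto
  have "card (X \<inter> Y) \<ge> 1" using assms by (metis IntI One_nat_def card_0_eq empty_iff finite_Int less_one not_le)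
  then show ?thesis unfolding A using assms by (simp add: card_insert_if card_Diff_singleton_if)
qed

lemma cross_one:
  assumes fin: "finite X" "finite Y" and ij: "i \<noteq> j"
    and X: "j \<in> X" "i \<notin> X"
    and Ynot: "\<not> (j \<in> Y \<and> i \<notin> Y \<and> sh i j Y \<notin> C)"
    and XY: "s \<le> card (X \<inter> Y)"
    and XshY: "j \<in> Y \<and> i \<notin> Y \<Longrightarrow> s \<le> card (X \<inter> sh i j Y)"
  shows "s \<le> card (sh i j X \<inter> Y)"
proof (cases "j \<in> Y \<and> i \<notin> Y")
  case True
  have "card (sh i j Y \<inter> X) + 1 = card (Y \<inter> X)"
    using card_sh_Int[of Y j i X] fin ij X True by simp
  then show ?thesis using card_sh_Int[of X j i Y] fin ij X True XshY[OF True]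
    by (simp add: Int_commute)
next
  case False
  then show ?thesis using card_sh_Int[of X j i Y] fin ij X XY by (auto split: if_splits)
qed

lemma cross_shift:
  assumes cr: "cross s A C" and fA: "\<forall>X\<in>A. finite X" and fC: "\<forall>Y\<in>C. finite Y" and ij: "i \<noteq> j"
  shows "cross s (shf i j A ` A) (shf i j C ` C)"
  unfolding cross_def
proof (intro ballI)
  fix X' Y' assume "X' \<in> shf i j A ` A" "Y' \<in> shf i j C ` C"
  then obtain X Y where XY: "X \<in> A" "Y \<in> C" "X' = shf i j A X" "Y' = shf i j C Y" by auto
  have fin: "finite X" "finite Y" using XY fA fC by auto
  have c0: "s \<le> card (X \<inter> Y)" using cr XY unfolding cross_def by auto
  show "s \<le> card (X' \<inter> Y')"
  proof (cases "j \<in> X \<and> i \<notin> X \<and> sh i j X \<notin> A")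
    case cx: True
    show ?thesis
    proof (cases "j \<in> Y \<and> i \<notin> Y \<and> sh i j Y \<notin> C")
      case True
      then show ?thesis using XY cx card_sh_sh[of X Y j i] fin ij c0 unfolding shf_def by simp
    next
      case False
      have "s \<le> card (X \<inter> sh i j Y)" if "j \<in> Y \<and> i \<notin> Y"
        using False that cr XY(1) unfolding cross_def by blast
      then have "s \<le> card (sh i j X \<inter> Y)"
        using cross_one[of X Y i j C s] fin ij cx False c0 by blast
      then show ?thesis using XY cx False unfolding shf_def by simp
    qed
  next
    case cx: False
    show ?thesis
    proof (cases "j \<in> Y \<and> i \<notin> Y \<and> sh i j Y \<notin> C")
      case True
      have "s \<le> card (Y \<inter> sh i j X)" if "j \<in> X \<and> i \<notin> X"
        using cx that cr XY(2) unfolding cross_def by (metis Int_commute)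
      then have "s \<le> card (sh i j Y \<inter> X)"
        using cross_one[of Y X i j A s] fin ij cx True c0 by (metis Int_commute)
      then show ?thesis using XY cx True unfolding shf_def by (simp add: Int_commute)
    next
      case False
      then show ?thesis using XY cx c0 False unfolding shf_def by simp
    qed
  qed
qed

definition lshifted :: "nat set set \<Rightarrow> bool" where
  "lshifted C = (\<forall>Y\<in>C. \<forall>i j. 1 \<le> i \<and> i < j \<and> j \<in> Y \<and> i \<notin> Y \<longrightarrow> sh i j Y \<in> C)"

lemma card_split:
  assumes "l \<le> w"
  shows "card (Z \<inter> {1..w}) = card (Z \<inter> {1..l}) + card (Z \<inter> {Suc l..w})"
proof -
  have "Z \<inter> {1..w} = (Z \<inter> {1..l}) \<union> (Z \<inter> {Suc l..w})" using assms by auto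
  moreover have "(Z \<inter> {1..l}) \<inter> (Z \<inter> {Suc l..w}) = {}" by auto
  ultimately show ?thesis by (simp add: card_Un_disjoint)
qed

lemma struct_lemma:
  assumes sC: "lshifted C" and Cn: "\<forall>Y\<in>C. Y \<subseteq> {1..n}" and Xn: "X \<subseteq> {1..n}"
  shows "Y \<in> C \<Longrightarrow> (\<forall>l. card (X \<inter> {1..l}) + card (Y \<inter> {1..l}) + 1 \<le> l + s)
     \<Longrightarrow> \<exists>Y'\<in>C. card (X \<inter> Y') < s"
proof (induction "card (X \<inter> Y)" arbitrary: Y rule: less_induct)
  case less
  note YC = less.prems(1) and cond = less.prems(2)
  show ?case
  proof (cases "card (X \<inter> Y) < s")
    case True then show ?thesis using YC by blast
  next
    case False
    have s1: "1 \<le> s" using cond[rule_format, of 0] by simp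
    have Yn: "Y \<subseteq> {1..n}" using Cn YC by blast
    have fX: "finite X" using Xn finite_subset by blast
    have fY: "finite Y" using Yn finite_subset by blast
    have ne: "X \<inter> Y \<noteq> {}" using False s1 by auto
    define w where "w = Max (X \<inter> Y)"
    have wXY: "w \<in> X \<inter> Y" unfolding w_def using ne fX Max_in[of "X \<inter> Y"] by blast
    have w1: "1 \<le> w" using wXY Xn by auto
    have XYw: "X \<inter> Y \<subseteq> {1..w}" using Xn fX w_def by auto
    have "card (X \<inter> {1..w}) + card (Y \<inter> {1..w}) = card ((X \<union> Y) \<inter> {1..w}) + card ((X \<inter> Y) \<inter> {1..w})"
      using card_Un_Int[of "X \<inter> {1..w}" "Y \<inter> {1..w}"] by (simp add: Int_Un_distrib2 Int_ac)
    moreover have "card ((X \<inter> Y) \<inter> {1..w}) = card (X \<inter> Y)" using XYw by (simp add: Int_absorb2)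
    ultimately have "card ((X \<union> Y) \<inter> {1..w}) < w" using cond[rule_format, of w] False by linarith
    then have "{1..w} - (X \<union> Y) \<noteq> {}"
      by (metis Diff_eq_empty_iff card_atLeastAtMost diff_Suc_1 inf.absorb_iff2 less_irrefl)
    define z where "z = Max ({1..w} - (X \<union> Y))"
    have zin: "z \<in> {1..w} - (X \<union> Y)" unfolding z_def using \<open>{1..w} - (X \<union> Y) \<noteq> {}\<close> Max_in[of "{1..w} - (X \<union> Y)"] by blast
    have zw: "z < w" using zin wXY by (metis DiffD1 DiffD2 IntD1 UnCI atLeastAtMost_iff le_neq_implies_less)
    have z1: "1 \<le> z" using zin by auto
    have above: "{Suc z..w} \<subseteq> X \<union> Y"
    proof
      fix x assume x: "x \<in> {Suc z..w}"
      show "x \<in> X \<union> Y"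
      proof (rule ccontr)
        assume "x \<notin> X \<union> Y"
        then have "x \<in> {1..w} - (X \<union> Y)" using x z1 by auto
        then have "x \<le> z" unfolding z_def by (simp add: Max_ge)
        then show False using x by auto
      qed
    qed
    have mid: "card (X \<inter> {1..l}) + card (Y \<inter> {1..l}) + 2 \<le> l + s" if l: "z \<le> l" "l < w" for l
    proof -
      have "card (X \<inter> {Suc l..w}) + card (Y \<inter> {Suc l..w}) = card ((X \<union> Y) \<inter> {Suc l..w}) + card ((X \<inter> Y) \<inter> {Suc l..w})"
        using card_Un_Int[of "X \<inter> {Suc l..w}" "Y \<inter> {Suc l..w}"] by (simp add: Int_Un_distrib2 Int_ac)
      moreover have "(X \<union> Y) \<inter> {Suc l..w} = {Suc l..w}" proof -
        have "{Suc l..w} \<subseteq> {Suc z..w}" using l by auto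
        then show ?thesis using above by blast
      qed
      moreover have "card ((X \<inter> Y) \<inter> {Suc l..w}) \<ge> 1"
        using wXY l by (metis IntI One_nat_def Suc_leI atLeastAtMost_iff card_gt_0_iff emptyE finite_Int finite_atLeastAtMost le_refl)
      ultimately have "card (X \<inter> {Suc l..w}) + card (Y \<inter> {Suc l..w}) \<ge> w - l + 1" by simp
      moreover have "card (X \<inter> {1..w}) = card (X \<inter> {1..l}) + card (X \<inter> {Suc l..w})"
        by (rule card_split) (use l in simp)
      moreover have "card (Y \<inter> {1..w}) = card (Y \<inter> {1..l}) + card (Y \<inter> {Suc l..w})"
        by (rule card_split) (use l in simp)
      ultimately show ?thesis using cond[rule_format, of w] l by linarith
    qed
    define Y' where "Y' = sh z w Y"
    have Y'C: "Y' \<in> C" using sC YC z1 zw wXY zin unfolding lshifted_def Y'_def by blast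
    have "X \<inter> Y' = (X \<inter> Y) - {w}" unfolding Y'_def sh_def using zin by auto
    then have lt: "card (X \<inter> Y') < card (X \<inter> Y)"
      using wXY fX card_Diff1_less[of "X \<inter> Y" w] by simp
    have cond': "\<forall>l. card (X \<inter> {1..l}) + card (Y' \<inter> {1..l}) + 1 \<le> l + s"
    proof
      fix l
      have fYl: "finite (Y \<inter> {1..l})" by simp
      show "card (X \<inter> {1..l}) + card (Y' \<inter> {1..l}) + 1 \<le> l + s"
      proof (cases "z \<le> l")
        case True
        have e: "Y' \<inter> {1..l} = insert z (Y \<inter> {1..l} - {w})" unfolding Y'_def sh_def using True z1 by auto
        show ?thesis
        proof (cases "l < w")
          case True
          have "card (Y' \<inter> {1..l}) \<le> card (Y \<inter> {1..l}) + 1"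
          proof -
            have "card (insert z (Y \<inter> {1..l} - {w})) \<le> card (Y \<inter> {1..l} - {w}) + 1"
              by (simp add: card_insert_if)
            moreover have "card (Y \<inter> {1..l} - {w}) \<le> card (Y \<inter> {1..l})"
              using fYl by (simp add: card_Diff1_le)
            ultimately show ?thesis using e by simp
          qed
          then show ?thesis using mid[OF \<open>z \<le> l\<close> True] by linarith
        next
          case False
          have "w \<in> Y \<inter> {1..l}" using False wXY w1 by auto
          moreover have "z \<notin> Y \<inter> {1..l} - {w}" using zin by auto
          moreover have "card (Y \<inter> {1..l}) = Suc (card (Y \<inter> {1..l} - {w}))"
            using card.remove[OF fYl] \<open>w \<in> Y \<inter> {1..l}\<close> by blast
          ultimately have "card (Y' \<inter> {1..l}) = card (Y \<inter> {1..l})" unfolding e using fYl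
            by (simp add: card_insert_disjoint)
          then show ?thesis using cond[rule_format, of l] by linarith
        qed
      next
        case False
        have "Y' \<inter> {1..l} \<subseteq> Y \<inter> {1..l}" unfolding Y'_def sh_def using False by auto
        then have "card (Y' \<inter> {1..l}) \<le> card (Y \<inter> {1..l})" using fYl card_mono by blast
        then show ?thesis using cond[rule_format, of l] by linarith
      qed
    qed
    show ?thesis using less.hyps[OF lt Y'C cond'] .
  qed
qed

lemma pow_sum: "finite T \<Longrightarrow> (\<Sum>S\<in>Pow T. (u::real) ^ card S) = (1 + u) ^ card T"
proof -
  assume f: "finite T"
  have "(\<Prod>x\<in>T. u + 1) = (\<Sum>S\<in>Pow T. (\<Prod>x\<in>S. u) * (\<Prod>x\<in>T - S. 1))"
    by (rule prod_add[OF f])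
  then show ?thesis by (simp add: add.commute)
qed

lemma finite_ksub: "finite (ksubsets n m)"
proof -
  have "ksubsets n m \<subseteq> Pow {1..n}" unfolding ksubsets_def by auto
  then show ?thesis by (rule finite_subset) simp
qed

lemma card_ksub: "card (ksubsets n m) = n choose m"
proof -
  have "ksubsets n m = {B. B \<subseteq> {1..n} \<and> card B = m}" unfolding ksubsets_def by simp
  then show ?thesis using n_subsets[of "{1..n}" m] by simp
qed

lemma cnt_sup:
  assumes S: "S \<subseteq> {1..n}" "card S = k" "k \<le> m"
  shows "card {X\<in>ksubsets n m. S \<subseteq> X} \<le> (n - k) choose (m - k)"
proof -
  have fS: "finite S" using S finite_subset by blast
  have inj: "inj_on (\<lambda>X. X - S) {X\<in>ksubsets n m. S \<subseteq> X}"
    by (rule inj_onI) auto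
  have img: "(\<lambda>X. X - S) ` {X\<in>ksubsets n m. S \<subseteq> X} \<subseteq> {B. B \<subseteq> {1..n} - S \<and> card B = m - k}"
  proof
    fix B assume "B \<in> (\<lambda>X. X - S) ` {X\<in>ksubsets n m. S \<subseteq> X}"
    then obtain X where X: "X \<in> ksubsets n m" "S \<subseteq> X" "B = X - S" by auto
    have "finite X" using X(1) unfolding ksubsets_def using finite_subset by blast
    then have "card B = m - k" using X S unfolding ksubsets_def by (simp add: card_Diff_subset fS)
    then show "B \<in> {B. B \<subseteq> {1..n} - S \<and> card B = m - k}" using X unfolding ksubsets_def by auto
  qed
  have "card {X\<in>ksubsets n m. S \<subseteq> X} = card ((\<lambda>X. X - S) ` {X\<in>ksubsets n m. S \<subseteq> X})"
    using card_image[OF inj] by simp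
  also have "\<dots> \<le> card {B. B \<subseteq> {1..n} - S \<and> card B = m - k}"
    by (rule card_mono[OF _ img]) simp
  also have "\<dots> = card ({1..n} - S) choose (m - k)" by (rule n_subsets) simp
  also have "card ({1..n} - S) = n - k" using S fS by (simp add: card_Diff_subset)
  finally show ?thesis .
qed

lemma binom_ratio:
  assumes "k \<le> m" "m \<le> n" "0 < n"
  shows "real ((n - k) choose (m - k)) \<le> real (n choose m) * (real m / real n) ^ k"
  using assms(1)
proof (induction k)
  case 0 then show ?case by simp
next
  case (Suc k)
  have km: "k < m" using Suc.prems by simp
  have IH: "real ((n - k) choose (m - k)) \<le> real (n choose m) * (real m / real n) ^ k"
    using Suc.IH km by simp
  have ab: "(m - k) * ((n - k) choose (m - k)) = (n - k) * ((n - k - 1) choose (m - k - 1))"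
    using binomial_absorption[of "m - k - 1" "n - k"] km by (simp add: Suc_diff_Suc)
  have nk: "0 < n - k" using km assms by simp
  have e: "real ((n - Suc k) choose (m - Suc k)) = real ((n - k) choose (m - k)) * (real (m - k) / real (n - k))"
  proof -
    have "real (m - k) * real ((n - k) choose (m - k)) = real (n - k) * real ((n - k - 1) choose (m - k - 1))"
      using ab by (metis of_nat_mult)
    then show ?thesis using nk by (simp add: field_simps)
  qed
  have r: "real (m - k) / real (n - k) \<le> real m / real n"
  proof -
    have "real (m - k) * real n \<le> real m * real (n - k)"
      using km assms by (simp add: of_nat_diff algebra_simps mult_left_mono)
    then show ?thesis using nk assms by (simp add: divide_simps)
  qed
  have "real ((n - Suc k) choose (m - Suc k)) \<le> real (n choose m) * (real m / real n) ^ k * (real m / real n)"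
    unfolding e by (rule mult_mono[OF IH r]) auto
  then show ?case by (metis mult.assoc power_Suc2)
qed

lemma cnt_sup_real:
  assumes S: "S \<subseteq> {1..n}" and mn: "m \<le> n" "0 < n"
  shows "real (card {X\<in>ksubsets n m. S \<subseteq> X}) \<le> real (n choose m) * (real m / real n) ^ card S"
proof (cases "card S \<le> m")
  case True
  then show ?thesis using cnt_sup[OF S refl True] binom_ratio[OF True mn]
    by (meson of_nat_le_iff order_trans)
next
  case False
  have "{X\<in>ksubsets n m. S \<subseteq> X} = {}"
  proof (rule ccontr)
    assume "{X\<in>ksubsets n m. S \<subseteq> X} \<noteq> {}"
    then obtain X where X: "X \<in> ksubsets n m" "S \<subseteq> X" by auto
    have "finite X" using X(1) unfolding ksubsets_def using finite_subset by blast
    then have "card S \<le> card X" using X card_mono by blast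
    then show False using X False unfolding ksubsets_def by simp
  qed
  then have "card {X\<in>ksubsets n m. S \<subseteq> X} = 0" by (simp only: card.empty)
  then show ?thesis by simp
qed

lemma mgf:
  assumes mn: "m \<le> n" "0 < n" and L: "L \<subseteq> {1..n}" and u: "0 \<le> u"
  shows "(\<Sum>X\<in>ksubsets n m. (1 + u) ^ card (X \<inter> L)) \<le> real (n choose m) * (1 + u * real m / real n) ^ card L"
proof -
  have fL: "finite L" using L finite_subset by blast
  let ?K = "ksubsets n m"
  have "(\<Sum>X\<in>?K. (1 + u) ^ card (X \<inter> L)) = (\<Sum>X\<in>?K. \<Sum>S\<in>Pow (X \<inter> L). u ^ card S)"
    by (rule sum.cong) (simp_all add: pow_sum fL del: Pow_Int_eq)
  also have "\<dots> = (\<Sum>X\<in>?K. \<Sum>S\<in>{S. S \<in> Pow L \<and> S \<subseteq> X}. u ^ card S)"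
    by (rule sum.cong) (auto intro: sum.cong)
  also have "\<dots> = (\<Sum>S\<in>Pow L. \<Sum>X\<in>{X. X \<in> ?K \<and> S \<subseteq> X}. u ^ card S)"
    by (rule sum.swap_restrict) (auto simp: finite_ksub fL)
  also have "\<dots> = (\<Sum>S\<in>Pow L. u ^ card S * real (card {X\<in>?K. S \<subseteq> X}))"
    by (simp add: mult.commute)
  also have "\<dots> \<le> (\<Sum>S\<in>Pow L. u ^ card S * (real (n choose m) * (real m / real n) ^ card S))"
    apply (rule sum_mono)
    apply (rule mult_left_mono)
    using cnt_sup_real[OF _ mn] L u by auto
  also have "\<dots> = real (n choose m) * (\<Sum>S\<in>Pow L. (u * real m / real n) ^ card S)"
  proof -
    have e: "\<And>k. (u * real m / real n)^k = u^k * (real m / real n)^k"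
      by (metis times_divide_eq_right power_mult_distrib)
    show ?thesis unfolding e sum_distrib_left by (simp add: mult.left_commute)
  qed
  also have "\<dots> = real (n choose m) * (1 + u * real m / real n) ^ card L"
    by (simp add: pow_sum fL)
  finally show ?thesis .
qed

lemma tail:
  assumes mn: "m \<le> n" "0 < n" and L: "L \<subseteq> {1..n}" and lam: "0 \<le> lam"
  shows "real (card {X\<in>ksubsets n m. y < real (card (X \<inter> L))}) * exp (lam * y)
      \<le> real (n choose m) * (1 + (exp lam - 1) * real m / real n) ^ card L"
proof -
  let ?T = "{X\<in>ksubsets n m. y < real (card (X \<inter> L))}"
  have fT: "finite ?T" using finite_ksub by simp
  have "real (card ?T) * exp (lam * y) = (\<Sum>X\<in>?T. exp (lam * y))" by simp
  also have "\<dots> \<le> (\<Sum>X\<in>?T. (1 + (exp lam - 1)) ^ card (X \<inter> L))"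
  proof (rule sum_mono)
    fix X assume "X \<in> ?T"
    then have "lam * y \<le> real (card (X \<inter> L)) * lam" using lam by (simp add: mult_left_mono mult.commute)
    then have "exp (lam * y) \<le> exp (real (card (X \<inter> L)) * lam)" by simp
    then show "exp (lam * y) \<le> (1 + (exp lam - 1)) ^ card (X \<inter> L)"
      by (simp add: exp_of_nat_mult)
  qed
  also have "\<dots> \<le> (\<Sum>X\<in>ksubsets n m. (1 + (exp lam - 1)) ^ card (X \<inter> L))"
    by (rule sum_mono2[OF finite_ksub]) auto
  also have "\<dots> \<le> real (n choose m) * (1 + (exp lam - 1) * real m / real n) ^ card L"
    by (rule mgf[OF mn L]) (use lam in simp)
  finally show ?thesis .
qed

lemma exp_neg_bound:
  assumes "0 \<le> (x::real)"
  shows "exp (- x) \<le> 1 - x + x^2"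
proof -
  have q: "1 + x + x^2/2 \<le> exp x" by (rule exp_lower_Taylor_quadratic[OF assms])
  have q2: "2 + 2*x + x^2 \<le> 2 * exp x" using q by linarith
  have pos: "0 \<le> 1 - x + x^2"
  proof (cases "x \<le> 1")
    case True thus ?thesis using zero_le_power2[of x] by linarith
  next
    case False then have "x * 1 \<le> x * x" by (intro mult_left_mono) auto
    thus ?thesis by (simp add: power2_eq_square)
  qed
  have id: "(1 - x + x^2) * (2 + 2*x + x^2) = 2 + x^2 + x^3 + x^4"
    by (simp add: power2_eq_square power3_eq_cube power4_eq_xxxx ring_distribs)
  have "0 \<le> x^2 + x^3 + x^4" using assms by simp
  then have "2 \<le> (1 - x + x^2) * (2 + 2*x + x^2)" using id by linarith
  also have "\<dots> \<le> (1 - x + x^2) * (2 * exp x)"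
    by (rule mult_left_mono[OF q2 pos])
  finally have "1 \<le> (1 - x + x^2) * exp x" by linarith
  then show ?thesis by (metis exp_gt_zero exp_minus inverse_eq_divide divide_le_eq)
qed

lemma tailU:
  assumes n: "0 < n" and an: "a \<le> n" and a: "0 < a" and l: "l \<le> n" and d: "0 \<le> d" "d \<le> 2 * real a"
  shows "real (card {X\<in>ksubsets n a. real l * real a / real n + d < real (card (X \<inter> {1..l}))})
         \<le> real (n choose a) * exp (- (d^2) / (4 * real a))"
proof -
  define lam where "lam = d / (2 * real a)"
  define mu where "mu = real l * real a / real n"
  define C where "C = real (n choose a)"
  have lam0: "0 \<le> lam" "lam \<le> 1" unfolding lam_def using d a by auto
  have mu0: "0 \<le> mu" "mu \<le> real a"
  proof -
    have "real l * real a \<le> real n * real a" using l by (intro mult_right_mono) auto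
    then show "0 \<le> mu" "mu \<le> real a" unfolding mu_def using n by (auto simp: divide_simps mult.commute)
  qed
  have L: "{1..l} \<subseteq> {1..n}" using l by auto
  have T: "real (card {X\<in>ksubsets n a. mu + d < real (card (X \<inter> {1..l}))}) * exp (lam * (mu + d))
      \<le> C * (1 + (exp lam - 1) * real a / real n) ^ card {1..l}"
    unfolding C_def by (rule tail[OF an n L lam0(1)])
  have b0: "0 \<le> 1 + (exp lam - 1) * real a / real n" using lam0 by simp
  have "(1 + (exp lam - 1) * real a / real n) ^ l \<le> exp ((exp lam - 1) * real a / real n) ^ l"
    by (rule power_mono[OF _ b0]) (rule exp_ge_add_one_self)
  also have "\<dots> = exp (mu * (exp lam - 1))"
    unfolding mu_def by (subst exp_of_nat_mult[symmetric]) (simp add: field_simps)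
  also have "\<dots> \<le> exp (mu * (lam + lam^2))"
    using exp_bound[OF lam0] mu0 by (simp add: mult_left_mono)
  finally have P: "(1 + (exp lam - 1) * real a / real n) ^ l \<le> exp (mu * (lam + lam^2))" .
  have C0: "0 \<le> C" unfolding C_def by simp
  have "real (card {X\<in>ksubsets n a. mu + d < real (card (X \<inter> {1..l}))}) * exp (lam * (mu + d))
      \<le> C * exp (mu * (lam + lam^2))"
    using T mult_left_mono[OF P C0] by simp
  then have "real (card {X\<in>ksubsets n a. mu + d < real (card (X \<inter> {1..l}))})
      \<le> C * exp (mu * (lam + lam^2)) / exp (lam * (mu + d))"
    by (simp add: divide_simps)
  also have "\<dots> = C * (exp (mu * (lam + lam^2)) / exp (lam * (mu + d)))" by simp
  also have "\<dots> = C * exp (mu * (lam + lam^2) - lam * (mu + d))" by (simp only: exp_diff)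
  also have "\<dots> = C * exp (mu * lam^2 - lam * d)"
    by (rule arg_cong[where f="\<lambda>x. C * exp x"]) (simp add: algebra_simps)
  also have "\<dots> \<le> C * exp (real a * lam^2 - lam * d)"
    using mu0 C0 by (intro mult_left_mono) (auto intro: mult_right_mono)
  also have "real a * lam^2 - lam * d = - (d^2) / (4 * real a)"
    unfolding lam_def using a by (simp add: field_simps power2_eq_square)
  finally show ?thesis unfolding mu_def C_def .
qed

lemma tailL:
  assumes n: "0 < n" and an: "a \<le> n" and a: "0 < a" and l: "l \<le> n" and d: "0 \<le> d" "d \<le> 2 * real a"
  shows "real (card {Y\<in>ksubsets n (n - a). real l * real (n - a) / real n + d < real (card (Y \<inter> {1..l}))})
         \<le> real (n choose a) * exp (- (d^2) / (4 * real a))"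
proof -
  define lam where "lam = d / (2 * real a)"
  define mu where "mu = real l * real a / real n"
  define C where "C = real (n choose a)"
  define y where "y = real l * real (n - a) / real n + d"
  have lam0: "0 \<le> lam" "lam \<le> 1" unfolding lam_def using d a by auto
  have mu0: "0 \<le> mu" "mu \<le> real a"
  proof -
    have "real l * real a \<le> real n * real a" using l by (intro mult_right_mono) auto
    then show "0 \<le> mu" "mu \<le> real a" unfolding mu_def using n by (auto simp: divide_simps mult.commute)
  qed
  have na: "real (n - a) = real n - real a" using an by (simp add: of_nat_diff)
  have y: "y = real l - mu + d" unfolding y_def mu_def na using n by (simp add: field_simps)
  have L: "{1..l} \<subseteq> {1..n}" using l by auto
  have Cs: "real (n choose (n - a)) = C" unfolding C_def using binomial_symmetric[OF an] by simp
  have T: "real (card {Y\<in>ksubsets n (n - a). y < real (card (Y \<inter> {1..l}))}) * exp (lam * y)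
      \<le> C * (1 + (exp lam - 1) * real (n - a) / real n) ^ card {1..l}"
    using tail[OF _ n L lam0(1), of "n - a" y] Cs by simp
  have eqb: "1 + (exp lam - 1) * real (n - a) / real n = exp lam * (1 + (exp (- lam) - 1) * real a / real n)"
    unfolding na using n by (simp add: field_simps exp_minus)
  have b0: "0 \<le> 1 + (exp (- lam) - 1) * real a / real n"
  proof -
    have "real a / real n \<le> 1" using an n by simp
    moreover have "0 \<le> exp (- lam) * (real a / real n)" by simp
    ultimately have "0 \<le> 1 - real a / real n + exp (- lam) * (real a / real n)" by linarith
    moreover have "1 + (exp (- lam) - 1) * real a / real n = 1 - real a / real n + exp (- lam) * (real a / real n)"
      using n by (simp add: field_simps)
    ultimately show ?thesis by linarith
  qed
  have "(1 + (exp lam - 1) * real (n - a) / real n) ^ l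
      = (exp lam * (1 + (exp (- lam) - 1) * real a / real n)) ^ l" unfolding eqb ..
  also have "\<dots> \<le> (exp lam * exp ((exp (- lam) - 1) * real a / real n)) ^ l"
    by (intro power_mono mult_left_mono) (use b0 in auto)
  also have "\<dots> = exp (lam + (exp (- lam) - 1) * real a / real n) ^ l" by (simp add: exp_add)
  also have "\<dots> = exp (real l * lam + mu * (exp (- lam) - 1))"
    unfolding mu_def by (subst exp_of_nat_mult[symmetric]) (simp add: field_simps)
  also have "\<dots> \<le> exp (real l * lam + mu * (- lam + lam^2))"
  proof -
    have "exp (- lam) - 1 \<le> - lam + lam^2" using exp_neg_bound[OF lam0(1)] by simp
    then have "mu * (exp (- lam) - 1) \<le> mu * (- lam + lam^2)" using mu0 by (simp add: mult_left_mono)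
    then show ?thesis by simp
  qed
  finally have P: "(1 + (exp lam - 1) * real (n - a) / real n) ^ l \<le> exp (real l * lam + mu * (- lam + lam^2))" .
  have C0: "0 \<le> C" unfolding C_def by simp
  have "real (card {Y\<in>ksubsets n (n - a). y < real (card (Y \<inter> {1..l}))}) * exp (lam * y)
      \<le> C * exp (real l * lam + mu * (- lam + lam^2))"
    using T mult_left_mono[OF P C0] by simp
  then have "real (card {Y\<in>ksubsets n (n - a). y < real (card (Y \<inter> {1..l}))})
      \<le> C * exp (real l * lam + mu * (- lam + lam^2)) / exp (lam * y)"
    by (simp add: divide_simps)
  also have "\<dots> = C * (exp (real l * lam + mu * (- lam + lam^2)) / exp (lam * y))" by simp
  also have "\<dots> = C * exp (real l * lam + mu * (- lam + lam^2) - lam * y)" by (simp only: exp_diff)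
  also have "\<dots> = C * exp (mu * lam^2 - lam * d)"
    by (rule arg_cong[where f="\<lambda>x. C * exp x"]) (simp add: algebra_simps y)
  also have "\<dots> \<le> C * exp (real a * lam^2 - lam * d)"
    using mu0 C0 by (intro mult_left_mono) (auto intro: mult_right_mono)
  also have "real a * lam^2 - lam * d = - (d^2) / (4 * real a)"
    unfolding lam_def using a by (simp add: field_simps power2_eq_square)
  finally show ?thesis unfolding y_def C_def .
qed

lemma ksub_fin: "X \<in> ksubsets n m \<Longrightarrow> finite X"
  unfolding ksubsets_def using finite_subset by blast

lemma fam_card_le: "A \<subseteq> ksubsets n a \<Longrightarrow> real (card A) \<le> real (n choose a)"
  using card_mono[OF finite_ksub] card_ksub by (metis of_nat_le_iff)

lemma atyp_bound:
  assumes "A' \<subseteq> {X\<in>ksubsets n m. \<exists>l\<le>n. f l < real (card (X \<inter> {1..l}))}"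
    and "\<And>l. l \<le> n \<Longrightarrow> real (card {X\<in>ksubsets n m. f l < real (card (X \<inter> {1..l}))}) \<le> b"
  shows "real (card A') \<le> real (n + 1) * b"
proof -
  have sub: "A' \<subseteq> (\<Union>l\<in>{..n}. {X\<in>ksubsets n m. f l < real (card (X \<inter> {1..l}))})" using assms(1) by auto
  have "card A' \<le> card (\<Union>l\<in>{..n}. {X\<in>ksubsets n m. f l < real (card (X \<inter> {1..l}))})"
  proof (rule card_mono)
    show "finite (\<Union>l\<in>{..n}. {X\<in>ksubsets n m. f l < real (card (X \<inter> {1..l}))})"
      by (rule finite_subset[OF _ finite_ksub[of n m]]) blast
  qed (rule sub)
  also have "\<dots> \<le> (\<Sum>l\<in>{..n}. card {X\<in>ksubsets n m. f l < real (card (X \<inter> {1..l}))})"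
    by (rule card_UN_le) simp
  finally have "real (card A') \<le> real (\<Sum>l\<in>{..n}. card {X\<in>ksubsets n m. f l < real (card (X \<inter> {1..l}))})"
    by (simp only: of_nat_le_iff)
  also have "\<dots> = (\<Sum>l\<in>{..n}. real (card {X\<in>ksubsets n m. f l < real (card (X \<inter> {1..l}))}))"
    by (rule of_nat_sum)
  also have "\<dots> \<le> (\<Sum>l\<in>{..n}. b)" by (rule sum_mono) (use assms(2) in auto)
  finally show ?thesis by simp
qed

lemma two_fam:
  assumes ta: "t < a" and an: "a < n" and A: "A \<subseteq> ksubsets n a" and B: "B \<subseteq> ksubsets n a"
    and AB: "\<forall>X\<in>A. \<forall>Y\<in>B. card (X \<inter> Y) \<le> t"
  shows "real (card A) \<le> sqrt (32 * real a * (real n - real a)) * exp (- ((real a - real t - 1)^2) / (40 * real a)) * real (n choose a)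
       \<or> real (card B) \<le> sqrt (32 * real a * (real n - real a)) * exp (- ((real a - real t - 1)^2) / (40 * real a)) * real (n choose a)"
    (is "_ \<le> ?eps * ?C \<or> _ \<le> _")
proof (cases "?eps \<ge> 1")
  case True
  have "real (card A) \<le> ?C" by (rule fam_card_le[OF A])
  also have "\<dots> \<le> ?eps * ?C" using True by (simp add: mult_le_cancel_right1)
  finally show ?thesis by simp
next
  case False
  define s where "s = a - t"
  define D where "D = real a - real t - 1"
  define d where "d = D / 2"
  define S where "S = sqrt (32 * real a * (real n - real a))"
  define g where "g = exp (- (D^2) / (40 * real a))"
  have eps: "?eps = S * g" unfolding S_def g_def D_def by simp
  have a0: "0 < a" using ta by simp
  have n0: "0 < n" using an by simp
  have D0: "0 \<le> D" unfolding D_def using ta by simp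
  have Ds: "D = real s - 1" unfolding D_def s_def using ta by (simp add: of_nat_diff)
  have s1: "1 \<le> s" unfolding s_def using ta by simp
  have d0: "0 \<le> d" "d \<le> 2 * real a" unfolding d_def D_def using ta by auto
  define Cc where "Cc = (\<lambda>Y. {1..n} - Y) ` B"
  have injc: "inj_on (\<lambda>Y. {1..n} - Y) B"
  proof (rule inj_onI)
    fix X Y assume "X \<in> B" "Y \<in> B" "{1..n} - X = {1..n} - Y"
    moreover have "X \<subseteq> {1..n}" "Y \<subseteq> {1..n}" using \<open>X \<in> B\<close> \<open>Y \<in> B\<close> B unfolding ksubsets_def by auto
    ultimately show "X = Y" by blast
  qed
  have cardC: "card Cc = card B" unfolding Cc_def by (rule card_image[OF injc])
  have Cck: "Cc \<subseteq> ksubsets n (n - a)"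
  proof
    fix Z assume "Z \<in> Cc"
    then obtain Y where Y: "Y \<in> B" "Z = {1..n} - Y" unfolding Cc_def by auto
    have "Y \<subseteq> {1..n}" "card Y = a" using Y B unfolding ksubsets_def by auto
    then have "card Z = n - a" using Y by (simp add: card_Diff_subset finite_subset)
    then show "Z \<in> ksubsets n (n - a)" using Y unfolding ksubsets_def by auto
  qed
  have crossC: "cross s A Cc"
    unfolding cross_def
  proof (intro ballI)
    fix X Z assume X: "X \<in> A" and "Z \<in> Cc"
    then obtain Y where Y: "Y \<in> B" "Z = {1..n} - Y" unfolding Cc_def by auto
    have Xs: "X \<subseteq> {1..n}" "card X = a" "finite X" using X A unfolding ksubsets_def
      by (auto intro: finite_subset)
    have "X \<inter> Z = X - (X \<inter> Y)" using Xs Y by auto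
    then have "card (X \<inter> Z) = card X - card (X \<inter> Y)" using Xs by (simp add: card_Diff_subset)
    moreover have "card (X \<inter> Y) \<le> t" using AB X Y(1) by blast
    ultimately show "s \<le> card (X \<inter> Z)" using Xs unfolding s_def by simp
  qed
  define P where "P = (\<lambda>(A', C'). A' \<subseteq> ksubsets n a \<and> C' \<subseteq> ksubsets n (n - a) \<and>
        card A' = card A \<and> card C' = card Cc \<and> cross s A' C')"
  have "P (A, Cc)" unfolding P_def using A Cck crossC by simp
  then obtain A' C' where PAC: "P (A', C')" and minP: "\<And>Q. P Q \<Longrightarrow> wt (fst (A', C')) + wt (snd (A', C')) \<le> wt (fst Q) + wt (snd Q)"
    using ex_has_least_nat[of P "(A, Cc)" "\<lambda>Q. wt (fst Q) + wt (snd Q)"] by (metis prod.exhaust)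
  have A'k: "A' \<subseteq> ksubsets n a" and C'k: "C' \<subseteq> ksubsets n (n - a)" and cA: "card A' = card A"
    and cC: "card C' = card Cc" and cr': "cross s A' C'" using PAC unfolding P_def by auto
  have fA': "finite A'" "\<forall>X\<in>A'. finite X" using A'k finite_subset[OF _ finite_ksub] ksub_fin by blast+
  have fC': "finite C'" "\<forall>X\<in>C'. finite X" using C'k finite_subset[OF _ finite_ksub] ksub_fin by blast+
  have shC: "lshifted C'"
    unfolding lshifted_def
  proof (intro ballI allI impI, rule ccontr)
    fix Y i j assume Y: "Y \<in> C'" and ij: "1 \<le> i \<and> i < j \<and> j \<in> Y \<and> i \<notin> Y" and nin: "sh i j Y \<notin> C'"
    have "Y \<subseteq> {1..n}" using Y C'k unfolding ksubsets_def by auto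
    then have i: "i \<in> {1..n}" using ij by auto
    have "P (shf i j A' ` A', shf i j C' ` C')"
      unfolding P_def using shift_ksub[OF A'k i] shift_ksub[OF C'k i] card_shift cA cC
        cross_shift[OF cr' fA'(2) fC'(2)] ij by simp
    then have "wt A' + wt C' \<le> wt (shf i j A' ` A') + wt (shf i j C' ` C')" using minP by fastforce
    moreover have "wt (shf i j A' ` A') \<le> wt A'" using wt_shift_le(1)[OF fA'] ij by blast
    moreover have "wt (shf i j C' ` C') < wt C'" using wt_shift_le(2)[OF fC'] ij Y nin by blast
    ultimately show False by linarith
  qed
  have C'n: "\<forall>Y\<in>C'. Y \<subseteq> {1..n}" using C'k unfolding ksubsets_def by auto
  define TA where "TA = {X\<in>ksubsets n a. \<forall>l\<le>n. real (card (X \<inter> {1..l})) \<le> real l * real a / real n + d}"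
  define TC where "TC = {Y\<in>ksubsets n (n - a). \<forall>l\<le>n. real (card (Y \<inter> {1..l})) \<le> real l * real (n - a) / real n + d}"
  have noboth: "A' \<inter> TA = {} \<or> C' \<inter> TC = {}"
  proof (rule ccontr)
    assume "\<not> (A' \<inter> TA = {} \<or> C' \<inter> TC = {})"
    then obtain X0 Y0 where X0: "X0 \<in> A'" "X0 \<in> TA" and Y0: "Y0 \<in> C'" "Y0 \<in> TC" by blast
    have X0n: "X0 \<subseteq> {1..n}" "card X0 = a" using X0 unfolding TA_def ksubsets_def by auto
    have Y0n: "Y0 \<subseteq> {1..n}" "card Y0 = n - a" using Y0 unfolding TC_def ksubsets_def by auto
    have cond: "\<forall>l. card (X0 \<inter> {1..l}) + card (Y0 \<inter> {1..l}) + 1 \<le> l + s"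
    proof
      fix l
      show "card (X0 \<inter> {1..l}) + card (Y0 \<inter> {1..l}) + 1 \<le> l + s"
      proof (cases "l \<le> n")
        case True
        have "real (card (X0 \<inter> {1..l})) \<le> real l * real a / real n + d" using X0 True unfolding TA_def by auto
        moreover have "real (card (Y0 \<inter> {1..l})) \<le> real l * real (n - a) / real n + d" using Y0 True unfolding TC_def by auto
        moreover have "real l * real a / real n + real l * real (n - a) / real n = real l"
          using an n0 by (simp add: of_nat_diff field_simps)
        ultimately have "real (card (X0 \<inter> {1..l})) + real (card (Y0 \<inter> {1..l})) \<le> real l + 2 * d" by linarith
        then have "real (card (X0 \<inter> {1..l}) + card (Y0 \<inter> {1..l}) + 1) \<le> real (l + s)"
          unfolding d_def Ds using s1 by (simp add: field_simps)
        then show ?thesis by (simp only: of_nat_le_iff)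
      next
        case False
        have "X0 \<inter> {1..l} = X0" "Y0 \<inter> {1..l} = Y0" using X0n(1) Y0n(1) False by auto
        then show ?thesis using X0n Y0n False s1 an by simp
      qed
    qed
    obtain Y' where "Y' \<in> C'" "card (X0 \<inter> Y') < s"
      using struct_lemma[OF shC C'n X0n(1) Y0(1) cond] by blast
    then show False using cr' X0(1) unfolding cross_def by fastforce
  qed
  have ex: "exp (- (d^2) / (4 * real a)) \<le> g * g"
  proof -
    have "- (d^2) / (4 * real a) \<le> - (D^2) / (40 * real a) + - (D^2) / (40 * real a)"
      unfolding d_def using a0 by (simp add: field_simps power2_eq_square)
    then show ?thesis unfolding g_def by (simp add: exp_add[symmetric])
  qed
  have g0: "0 < g" unfolding g_def by simp
  have Sg: "S * g < 1" using False eps by linarith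
  have aa: "real n - 1 \<le> real a * (real n - real a)"
  proof -
    have "0 \<le> (real a - 1) * (real n - real a - 1)" using a0 an by (simp add: mult_nonneg_nonneg)
    then show ?thesis by (simp add: algebra_simps)
  qed
  have S2: "real (n + 1) \<le> S * S"
  proof -
    have "S * S = 32 * real a * (real n - real a)" unfolding S_def using an by (simp add: mult_nonneg_nonneg)
    moreover have "2 \<le> n" using a0 an by simp
    then have "2 \<le> real n" by simp
    moreover have "32 * real a * (real n - real a) = 32 * (real a * (real n - real a))" by simp
    ultimately show ?thesis using aa by simp
  qed
  have S0: "0 < S" unfolding S_def using a0 an by simp
  have key: "real (n + 1) * (real (n choose a) * exp (- (d^2) / (4 * real a))) \<le> ?eps * ?C"
  proof -
    have C0: "0 \<le> ?C" by simp
    have "real (n + 1) * exp (- (d^2) / (4 * real a)) \<le> real (n + 1) * (g * g)"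
      using ex by (intro mult_left_mono) auto
    also have "\<dots> \<le> S * S * g * g" using S2 g0 by (simp add: mult_right_mono)
    also have "\<dots> \<le> S * g" 
    proof -
      have "S * g * (S * g) \<le> S * g * 1" using Sg S0 g0 by (intro mult_left_mono) auto
      then show ?thesis by (simp add: ac_simps)
    qed
    finally have "real (n + 1) * exp (- (d^2) / (4 * real a)) \<le> ?eps" using eps by simp
    then have "real (n + 1) * exp (- (d^2) / (4 * real a)) * ?C \<le> ?eps * ?C" using C0 by (rule mult_right_mono)
    then show ?thesis by (simp add: ac_simps)
  qed
  show ?thesis
  proof (cases "A' \<inter> TA = {}")
    case True
    have "A' \<subseteq> {X\<in>ksubsets n a. \<exists>l\<le>n. real l * real a / real n + d < real (card (X \<inter> {1..l}))}"
    proof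
      fix X assume X: "X \<in> A'"
      then have "X \<in> ksubsets n a" using A'k by blast
      moreover have "X \<notin> TA" using True X by blast
      ultimately show "X \<in> {X\<in>ksubsets n a. \<exists>l\<le>n. real l * real a / real n + d < real (card (X \<inter> {1..l}))}"
        unfolding TA_def by (auto simp: not_le)
    qed
    then have "real (card A') \<le> real (n + 1) * (real (n choose a) * exp (- (d^2) / (4 * real a)))"
      by (rule atyp_bound) (rule tailU[OF n0 less_imp_le[OF an] a0 _ d0])
    then show ?thesis using key cA by simp
  next
    case False
    then have True: "C' \<inter> TC = {}" using noboth by simp
    have "C' \<subseteq> {X\<in>ksubsets n (n - a). \<exists>l\<le>n. real l * real (n - a) / real n + d < real (card (X \<inter> {1..l}))}"
    proof
      fix X assume X: "X \<in> C'"
      then have "X \<in> ksubsets n (n - a)" using C'k by blast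
      moreover have "X \<notin> TC" using True X by blast
      ultimately show "X \<in> {X\<in>ksubsets n (n - a). \<exists>l\<le>n. real l * real (n - a) / real n + d < real (card (X \<inter> {1..l}))}"
        unfolding TC_def by (auto simp: not_le)
    qed
    then have "real (card C') \<le> real (n + 1) * (real (n choose a) * exp (- (d^2) / (4 * real a)))"
      by (rule atyp_bound) (rule tailL[OF n0 less_imp_le[OF an] a0 _ d0])
    then show ?thesis using key cC cardC by simp
  qed
qed

lemma k_le_pow: "k - 1 \<le> (2::real) powr (real k - 2)" if "1 \<le> k" for k :: nat
proof (cases "k = 1")
  case True then show ?thesis by simp
next
  case False
  then have k2: "2 \<le> k" using that by simp
  have kk: "real k - 2 = real (k - 2)" using k2 by (simp add: of_nat_diff)
  have e0: "(2::real) powr real (k - 2) = 2 ^ (k - 2)" by (rule powr_realpow) simp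
  have e: "(2::real) powr (real k - 2) = 2 ^ (k - 2)" using e0 kk by (simp only:)
  have lt: "k - 2 < 2 ^ (k - 2)" by (rule less_exp)
  have ks: "k - 1 = Suc (k - 2)" using k2 by simp
  have "k - 1 \<le> (2::nat) ^ (k - 2)" unfolding ks using lt by (rule Suc_leI)
  then have "real (k - 1) \<le> 2 ^ (k - 2)" by (metis of_nat_le_iff of_nat_numeral of_nat_power)
  then show ?thesis using e that by (simp add: of_nat_diff)
qed

theorem lemma5:
  fixes n a t k :: nat and \<F> :: "nat \<Rightarrow> nat set set"
  assumes "t < a" and "a < n"
    and "\<And>i. i \<in> {1..k} \<Longrightarrow> \<F> i \<subseteq> ksubsets n a"
    and "\<And>i. i \<in> {1..k} \<Longrightarrow>
      real (card (\<F> i)) \<ge> 2 powr (real k - 2) * sqrt (32 * real a * (real n - real a))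
        * exp (- ((real a - real t - 1)^2) / (40 * real a)) * real (n choose a) + 2 powr (real k - 2)"
  shows "\<exists>F :: nat \<Rightarrow> nat set. (\<forall>i\<in>{1..k}. F i \<in> \<F> i) \<and>
           (\<forall>i\<in>{2..k}. card (F 1 \<inter> F i) \<ge> t + 1)"
proof (cases "k = 0")
  case True
  then show ?thesis by auto
next
  case False
  then have k1: "1 \<le> k" by simp
  define eC where "eC = sqrt (32 * real a * (real n - real a)) * exp (- ((real a - real t - 1)^2) / (40 * real a)) * real (n choose a)"
  define p where "p = (2::real) powr (real k - 2)"
  have p0: "0 < p" unfolding p_def by simp
  have eC0: "0 \<le> eC" unfolding eC_def using assms(2) by simp
  have hyp: "\<And>i. i \<in> {1..k} \<Longrightarrow> p * eC + p \<le> real (card (\<F> i))"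
    using assms(4) unfolding p_def eC_def by (simp add: mult.assoc)
  define Bad where "Bad = (\<lambda>i. {X\<in>\<F> 1. \<forall>Y\<in>\<F> i. card (X \<inter> Y) \<le> t})"
  have Badb: "real (card (Bad i)) \<le> eC" if i: "i \<in> {2..k}" for i
  proof -
    have i1: "i \<in> {1..k}" using i by simp
    have "Bad i \<subseteq> ksubsets n a" using assms(3)[of 1] k1 unfolding Bad_def by auto
    then have "real (card (Bad i)) \<le> eC \<or> real (card (\<F> i)) \<le> eC"
      using two_fam[OF assms(1,2) _ assms(3)[OF i1], of "Bad i"] unfolding Bad_def eC_def by blast
    moreover have "1 \<le> p"
    proof -
      have kk: "real k - 2 = real (k - 2)" using i by (simp add: of_nat_diff)
      have e0: "(2::real) powr real (k - 2) = 2 ^ (k - 2)" by (rule powr_realpow) simp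
      have "(1::real) \<le> 2 ^ (k - 2)" by simp
      then show ?thesis unfolding p_def using e0 kk by (simp only:)
    qed
    then have "1 * eC \<le> p * eC" using eC0 by (rule mult_right_mono)
    then have "eC < real (card (\<F> i))"
      using hyp[OF i1] \<open>1 \<le> p\<close> by linarith
    ultimately show ?thesis by linarith
  qed
  have F1: "finite (\<F> 1)" using assms(3)[of 1] k1 finite_subset[OF _ finite_ksub] by auto
  have "card (\<Union>i\<in>{2..k}. Bad i) \<le> (\<Sum>i\<in>{2..k}. card (Bad i))" by (rule card_UN_le) simp
  then have "real (card (\<Union>i\<in>{2..k}. Bad i)) \<le> (\<Sum>i\<in>{2..k}. real (card (Bad i)))"
    by (metis of_nat_le_iff of_nat_sum)
  also have "\<dots> \<le> (\<Sum>i\<in>{2..k}. eC)" by (rule sum_mono) (rule Badb)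
  also have "\<dots> = real (k - 1) * eC" by simp
  also have "\<dots> \<le> p * eC" unfolding p_def using k_le_pow[OF k1] eC0 k1 by (intro mult_right_mono) (auto simp: of_nat_diff)
  also have "\<dots> < real (card (\<F> 1))" using hyp[of 1] k1 p0 by simp
  finally have "card (\<Union>i\<in>{2..k}. Bad i) < card (\<F> 1)" by simp
  moreover have "(\<Union>i\<in>{2..k}. Bad i) \<subseteq> \<F> 1" unfolding Bad_def by auto
  ultimately have "\<not> \<F> 1 \<subseteq> (\<Union>i\<in>{2..k}. Bad i)"
    by (metis less_irrefl subset_antisym)
  then obtain X where X: "X \<in> \<F> 1" "\<And>i. i \<in> {2..k} \<Longrightarrow> X \<notin> Bad i" by blast
  have ex: "\<exists>Y. Y \<in> \<F> i \<and> t + 1 \<le> card (X \<inter> Y)" if "i \<in> {2..k}" for i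
    using X(1) X(2)[OF that] unfolding Bad_def by (auto simp: not_le)
  define F where "F = (\<lambda>i. if i = 1 then X else (SOME Y. Y \<in> \<F> i \<and> t + 1 \<le> card (X \<inter> Y)))"
  have Fi: "F i \<in> \<F> i \<and> t + 1 \<le> card (X \<inter> F i)" if "i \<in> {2..k}" for i
  proof -
    have "i \<noteq> 1" using that by simp
    then show ?thesis unfolding F_def using someI_ex[OF ex[OF that]] by simp
  qed
  have "\<forall>i\<in>{1..k}. F i \<in> \<F> i"
  proof
    fix i assume i: "i \<in> {1..k}"
    show "F i \<in> \<F> i"
    proof (cases "i = 1")
      case True then show ?thesis using X(1) unfolding F_def by simp
    next
      case False then have "i \<in> {2..k}" using i by auto
      then show ?thesis using Fi by blast
    qed
  qed
  moreover have "\<forall>i\<in>{2..k}. card (F 1 \<inter> F i) \<ge> t + 1"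
    using Fi unfolding F_def by auto
  ultimately show ?thesis by blast
qed

end
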